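(* Let $\lambda\ge\Delta^{-1/2}$. For every $(p,g)\in\mathcal Z$, \[ \mu_{\min}\,\ell^\Theta_{\mathrm C,\infty}\bigl(p,\mathcal G(p)\bigr)\le d_\lambda\Bigl((p,g),\bigl(h^{(g)}_\mu(p),\bar r^\pi\bigr)\Bigr) \quad\text{and}\quad |g-\bar r^\pi|\le\lambda^{-1}d_\lambda\Bigl((p,g),\bigl(h^{(g)}_\mu(p),\bar r^\pi\bigr)\Bigr), \] where $\mu_{\min}:=\min_i\mu_i$.
   Context: Finite MDP with state set $\mathcal{S}=\{1,\dots,m\}$, finite action set, deterministic rewards in $[0,1]$, fixed policy inducing a transition matrix $P=(P_{ij})$ on $\mathcal S$ that is irreducible and aperiodic with stationary distribution $\mu$. $R_{ij}$ is the finite-valued $[0,1]$-valued random one-step reward conditioned on transition $i\to j$; gain $\bar r^\pi=\sum_i\mu_i\sum_jP_{ij}\mathbb E[R_{ij}]$; $\nu^{(g)}_{ij}:=\mathrm{Law}(R_{ij}-g)$. $\Theta=\{\theta_1<\dots<\theta_d\}$ with constant stride $\Delta>0$; $\Delta_d$ the probability simplex of $\mathbb R^d$; $\Delta_d^{\mathcal S}$ families $(p_i)_{i\in\mathcal S}$, $p_i\in\Delta_d$; $\mathcal Z:=\Delta_d^{\mathcal S}\times[0,1]$. For $u\in\Delta_d$, $\eta^{u,0}:=\sum_ku_k\delta_{\theta_k}$. Categorical projection $\Pi^\Theta_{\mathrm C}$: $\delta_x\mapsto\delta_{\theta_1}$ if $x\le\theta_1$, $\delta_{\theta_d}$ if $x\ge\theta_d$,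 $\frac{\theta_{k+1}-x}{\Delta}\delta_{\theta_k}+\frac{x-\theta_k}{\Delta}\delta_{\theta_{k+1}}$ if $\theta_k\le x\le\theta_{k+1}$, extended linearly to laws. $\mathcal G_g(p)$ is the unique $q\in\Delta_d^{\mathcal S}$ with $\eta^{q_i,0}=\Pi^\Theta_{\mathrm C}(\sum_jP_{ij}(\nu^{(g)}_{ij}\ast\eta^{p_j,0}))$ for all $i$; $\mathcal G:=\mathcal G_{\bar r^\pi}$. $h^{(g)}_\mu(p)_i:=(1-\mu_i)p_i+\mu_i\mathcal G_g(p)_i$. Coordinate Cramér metric: $F_u(\theta_k):=\sum_{j\le k}u_j$, $\ell^\Theta_{\mathrm C}(u,v)^2:=\Delta\sum_{k=1}^{d-1}(F_u(\theta_k)-F_v(\theta_k))^2$, $\ell^\Theta_{\mathrm C,\infty}(p,q):=\max_i\ell^\Theta_{\mathrm C}(p_i,q_i)$; $d_\lambda((p,g),(q,g')):=\ell^\Theta_{\mathrm C,\infty}(p,q)+\lambda|g-g'|$. *)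

theory Defs
  imports "HOL-Probability.Probability"
begin

text \<open>States are the elements of a finite type 's (playing the role of {1..m}).
  P i j is the transition probability i -> j.\<close>

definition stochastic_matrix :: "('s::finite \<Rightarrow> 's \<Rightarrow> real) \<Rightarrow> bool" where
  "stochastic_matrix P \<longleftrightarrow> (\<forall>i j. 0 \<le> P i j) \<and> (\<forall>i. (\<Sum>j\<in>UNIV. P i j) = 1)"

fun mpow :: "('s::finite \<Rightarrow> 's \<Rightarrow> real) \<Rightarrow> nat \<Rightarrow> 's \<Rightarrow> 's \<Rightarrow> real" where
  "mpow P 0 i j = (if i = j then 1 else 0)"
| "mpow P (Suc n) i j = (\<Sum>l\<in>UNIV. mpow P n i l * P l j)"

definition irreducible_matrix :: "('s::finite \<Rightarrow> 's \<Rightarrow> real) \<Rightarrow> bool" where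
  "irreducible_matrix P \<longleftrightarrow> (\<forall>i j. \<exists>n>0. mpow P n i j > 0)"

definition aperiodic_matrix :: "('s::finite \<Rightarrow> 's \<Rightarrow> real) \<Rightarrow> bool" where
  "aperiodic_matrix P \<longleftrightarrow> (\<forall>i. Gcd {n. n > 0 \<and> mpow P n i i > 0} = 1)"

definition stationary_dist :: "('s::finite \<Rightarrow> 's \<Rightarrow> real) \<Rightarrow> ('s \<Rightarrow> real) \<Rightarrow> bool" where
  "stationary_dist P mu \<longleftrightarrow> (\<forall>i. 0 \<le> mu i) \<and> (\<Sum>i\<in>UNIV. mu i) = 1
     \<and> (\<forall>j. (\<Sum>i\<in>UNIV. mu i * P i j) = mu j)"

text \<open>R i j is the (finite-valued, [0,1]-valued) law of the one-step reward on transition i -> j.\<close>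

definition gain :: "('s::finite \<Rightarrow> 's \<Rightarrow> real) \<Rightarrow> ('s \<Rightarrow> 's \<Rightarrow> real pmf) \<Rightarrow> ('s \<Rightarrow> real) \<Rightarrow> real" where
  "gain P R mu = (\<Sum>i\<in>UNIV. mu i * (\<Sum>j\<in>UNIV. P i j * measure_pmf.expectation (R i j) (\<lambda>r. r)))"

text \<open>The grid is theta_k = th0 + k * Del for k = 0..d-1 (0-indexed version of theta_1..theta_d);
  vectors u in the prob_simplex are functions nat => real, of which only indices < d matter.\<close>

definition theta :: "real \<Rightarrow> real \<Rightarrow> nat \<Rightarrow> real" where
  "theta th0 Del k = th0 + real k * Del"

definition prob_simplex :: "nat \<Rightarrow> (nat \<Rightarrow> real) set" where
  "prob_simplex d = {u. (\<forall>k<d. 0 \<le> u k) \<and> (\<Sum>k<d. u k) = 1}"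

definition proj_dirac :: "real \<Rightarrow> real \<Rightarrow> nat \<Rightarrow> real \<Rightarrow> nat \<Rightarrow> real" where
  "proj_dirac th0 Del d x k =
    (let \<theta> = theta th0 Del in
     if x \<le> \<theta> 0 then (if k = 0 then 1 else 0)
     else if \<theta> (d - 1) \<le> x then (if k = d - 1 then 1 else 0)
     else if \<theta> k \<le> x \<and> x \<le> \<theta> (k + 1) then (\<theta> (k + 1) - x) / Del
     else if 1 \<le> k \<and> \<theta> (k - 1) \<le> x \<and> x \<le> \<theta> k then (x - \<theta> (k - 1)) / Del
     else 0)"

definition cat_proj :: "real \<Rightarrow> real \<Rightarrow> nat \<Rightarrow> real pmf \<Rightarrow> nat \<Rightarrow> real" where
  "cat_proj th0 Del d \<eta> k = measure_pmf.expectation \<eta> (\<lambda>x. proj_dirac th0 Del d x k)"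

text \<open>G_g(p)_i: coefficients of Pi_C (sum_j P_ij (nu^(g)_ij * eta^{p_j,0})). The law
  nu^(g)_ij * eta^{p_j,0} is the mixture over k' (weights p_j k') of the law of
  R_ij - g + theta_k', so by linearity of the projection:\<close>

definition Gop :: "real \<Rightarrow> real \<Rightarrow> nat \<Rightarrow> ('s::finite \<Rightarrow> 's \<Rightarrow> real) \<Rightarrow> ('s \<Rightarrow> 's \<Rightarrow> real pmf)
    \<Rightarrow> real \<Rightarrow> ('s \<Rightarrow> nat \<Rightarrow> real) \<Rightarrow> 's \<Rightarrow> nat \<Rightarrow> real" where
  "Gop th0 Del d P R g p i k =
     (\<Sum>j\<in>UNIV. P i j * (\<Sum>k'<d. p j k' *
        cat_proj th0 Del d (map_pmf (\<lambda>r. r - g + theta th0 Del k') (R i j)) k))"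

definition hop :: "real \<Rightarrow> real \<Rightarrow> nat \<Rightarrow> ('s::finite \<Rightarrow> 's \<Rightarrow> real) \<Rightarrow> ('s \<Rightarrow> 's \<Rightarrow> real pmf)
    \<Rightarrow> ('s \<Rightarrow> real) \<Rightarrow> real \<Rightarrow> ('s \<Rightarrow> nat \<Rightarrow> real) \<Rightarrow> 's \<Rightarrow> nat \<Rightarrow> real" where
  "hop th0 Del d P R mu g p i k = (1 - mu i) * p i k + mu i * Gop th0 Del d P R g p i k"

definition cdfF :: "(nat \<Rightarrow> real) \<Rightarrow> nat \<Rightarrow> real" where
  "cdfF u k = (\<Sum>j\<le>k. u j)"

definition cramer :: "real \<Rightarrow> nat \<Rightarrow> (nat \<Rightarrow> real) \<Rightarrow> (nat \<Rightarrow> real) \<Rightarrow> real" where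
  "cramer Del d u v = sqrt (Del * (\<Sum>k<d - 1. (cdfF u k - cdfF v k)^2))"

definition cramer_inf :: "real \<Rightarrow> nat \<Rightarrow> ('s::finite \<Rightarrow> nat \<Rightarrow> real) \<Rightarrow> ('s \<Rightarrow> nat \<Rightarrow> real) \<Rightarrow> real" where
  "cramer_inf Del d p q = Max (range (\<lambda>i. cramer Del d (p i) (q i)))"

definition dlam :: "real \<Rightarrow> nat \<Rightarrow> real \<Rightarrow> ('s::finite \<Rightarrow> nat \<Rightarrow> real) \<times> real
     \<Rightarrow> ('s \<Rightarrow> nat \<Rightarrow> real) \<times> real \<Rightarrow> real" where
  "dlam Del d lam pg qg' = cramer_inf Del d (fst pg) (fst qg') + lam * \<bar>snd pg - snd qg'\<bar>"

end

theory Submission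
  imports Defs
begin

definition clamp :: "real \<Rightarrow> real" where "clamp t = max 0 (min 1 t)"
definition ramp :: "real \<Rightarrow> real" where "ramp t = max 0 t"

lemma clamp_ramp: "clamp t = ramp t - ramp (t - 1)"
  by (simp add: clamp_def ramp_def max_def min_def)

lemma proj_z:
  assumes D: "Del > 0"
  shows "proj_dirac th0 Del d x k =
    (let z = (x - th0) / Del in
     if z \<le> 0 then (if k = 0 then 1 else 0)
     else if real (d - 1) \<le> z then (if k = d - 1 then 1 else 0)
     else if real k \<le> z \<and> z \<le> real k + 1 then real k + 1 - z
     else if 1 \<le> k \<and> real k - 1 \<le> z \<and> z \<le> real k then z - (real k - 1)
     else 0)"
proof -
  define z where "z = (x - th0) / Del"
  have x: "x = th0 + z * Del" using D unfolding z_def by (simp add: field_simps)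
  have e1: "\<And>a::real. (th0 + a*Del \<le> th0 + z * Del) = (a \<le> z)" using D by simp
  have e2: "\<And>a::real. (th0 + z * Del \<le> th0 + a*Del) = (z \<le> a)" using D by simp
  have e3: "\<And>a::real. (th0 + a*Del - (th0 + z * Del))/Del = a - z" using D by (simp add: field_simps)
  have e4: "\<And>a::real. (th0 + z * Del - (th0 + a*Del))/Del = z - a" using D by (simp add: field_simps)
  have e5: "\<And>a::nat. 1 \<le> a \<Longrightarrow> real (a - 1) = real a - 1" by simp
  show ?thesis
    unfolding z_def[symmetric] unfolding x proj_dirac_def theta_def Let_def e1 e2 e3 e4
    by (cases k) (auto simp: e5)
qed

lemma proj0:
  assumes D: "Del > 0" and d: "0 < d - 1"
  shows "proj_dirac th0 Del d x 0 = clamp (1 - (x - th0) / Del)"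
proof -
  define z where "z = (x - th0) / Del"
  have "real (d - 1) \<ge> 1" using d by simp
  then show ?thesis unfolding proj_z[OF D] z_def[symmetric] Let_def clamp_def
    using d by auto
qed

lemma projS:
  assumes D: "Del > 0" and d: "Suc k < d - 1"
  shows "proj_dirac th0 Del d x (Suc k) =
    clamp (real k + 2 - (x - th0) / Del) - clamp (real k + 1 - (x - th0) / Del)"
proof -
  define z where "z = (x - th0) / Del"
  have "real (d - 1) \<ge> real k + 2" using d by linarith
  then show ?thesis unfolding proj_z[OF D] z_def[symmetric] Let_def clamp_def
    using d by auto
qed

lemma cdf_proj:
  assumes D: "Del > 0"
  shows "k < d - 1 \<Longrightarrow> cdfF (proj_dirac th0 Del d x) k = clamp (real k + 1 - (x - th0) / Del)"
proof (induction k)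
  case 0
  then show ?case using proj0[OF D] by (simp add: cdfF_def)
next
  case (Suc k)
  then have "cdfF (proj_dirac th0 Del d x) (Suc k) = clamp (real k + 1 - (x - th0) / Del)
     + proj_dirac th0 Del d x (Suc k)" by (simp add: cdfF_def)
  also have "\<dots> = clamp (real (Suc k) + 1 - (x - th0) / Del)"
    using projS[OF D Suc.prems] by (simp add: algebra_simps)
  finally show ?case .
qed

lemma clamp_sum_bound:
  fixes z z' :: real
  assumes "z' \<le> z"
  shows "(\<Sum>k<n. (clamp (real k + 1 - z') - clamp (real k + 1 - z))^2) \<le> (z - z')^2"
proof -
  define f where "f k = ramp (real k - z') - ramp (real k - z)" for k :: nat
  have dk: "clamp (real k + 1 - z') - clamp (real k + 1 - z) = f (Suc k) - f k" for k
    unfolding f_def clamp_ramp by (simp add: algebra_simps)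
  have nn: "0 \<le> f (Suc k) - f k" "f (Suc k) - f k \<le> z - z'" for k
    using assms unfolding dk[symmetric] clamp_def by auto
  have "(\<Sum>k<n. (f (Suc k) - f k)^2) \<le> (\<Sum>k<n. (z - z') * (f (Suc k) - f k))"
    apply (rule sum_mono) using nn by (simp add: power2_eq_square mult_right_mono)
  also have "\<dots> = (z - z') * (f n - f 0)"
    by (simp add: sum_distrib_left[symmetric] sum_lessThan_telescope)
  also have "\<dots> \<le> (z - z') * (z - z')"
    apply (rule mult_left_mono) using assms unfolding f_def ramp_def by auto
  finally show ?thesis by (simp add: dk power2_eq_square)
qed

lemma cdf_diff_bound:
  assumes D: "Del > 0"
  shows "(\<Sum>k<d-1. (cdfF (proj_dirac th0 Del d x) k - cdfF (proj_dirac th0 Del d y) k)^2)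
     \<le> ((x - y) / Del)^2"
proof -
  define zx where "zx = (x - th0) / Del"
  define zy where "zy = (y - th0) / Del"
  have xy: "(x - y) / Del = zx - zy" unfolding zx_def zy_def by (simp add: diff_divide_distrib)
  have "(\<Sum>k<d-1. (cdfF (proj_dirac th0 Del d x) k - cdfF (proj_dirac th0 Del d y) k)^2)
      = (\<Sum>k<d-1. (clamp (real k + 1 - zy) - clamp (real k + 1 - zx))^2)"
    apply (rule sum.cong) using cdf_proj[OF D] unfolding zx_def zy_def
    by (auto simp: power2_commute)
  also have "\<dots> \<le> (zx - zy)^2"
  proof (cases "zy \<le> zx")
    case True then show ?thesis by (rule clamp_sum_bound)
  next
    case False
    then have "(\<Sum>k<d-1. (clamp (real k + 1 - zx) - clamp (real k + 1 - zy))^2) \<le> (zy - zx)^2"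
      by (intro clamp_sum_bound) simp
    then show ?thesis by (simp add: power2_commute)
  qed
  finally show ?thesis using xy by simp
qed

lemma cs_weighted:
  fixes w f :: "'a \<Rightarrow> real"
  assumes A: "finite A" and w: "\<And>a. a \<in> A \<Longrightarrow> 0 \<le> w a" and sw: "sum w A \<le> 1"
  shows "(\<Sum>a\<in>A. w a * f a)^2 \<le> (\<Sum>a\<in>A. w a * (f a)^2)"
proof -
  define m where "m = (\<Sum>a\<in>A. w a * f a)"
  have "0 \<le> (\<Sum>a\<in>A. w a * (f a - m)^2)"
    by (rule sum_nonneg) (simp add: w)
  also have "\<dots> = (\<Sum>a\<in>A. w a * (f a)^2) - 2 * m * (\<Sum>a\<in>A. w a * f a) + m^2 * sum w A"
    by (simp add: power2_diff algebra_simps sum.distrib sum_subtractf sum_distrib_left sum_distrib_right)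
  finally have "m^2 * (2 - sum w A) \<le> (\<Sum>a\<in>A. w a * (f a)^2)"
    unfolding m_def[symmetric] by (simp add: algebra_simps power2_eq_square)
  moreover have "m^2 \<le> m^2 * (2 - sum w A)" using sw
    by (simp add: mult_le_cancel_left1)
  ultimately show ?thesis unfolding m_def by linarith
qed

lemma jensen_L2:
  fixes w :: "'a \<Rightarrow> real" and f :: "'a \<Rightarrow> 'b \<Rightarrow> real"
  assumes A: "finite A" and K: "finite K" and w: "\<And>a. a \<in> A \<Longrightarrow> 0 \<le> w a"
    and sw: "sum w A \<le> 1" and B: "0 \<le> B"
    and fb: "\<And>a. a \<in> A \<Longrightarrow> (\<Sum>k\<in>K. (f a k)^2) \<le> B"
  shows "(\<Sum>k\<in>K. (\<Sum>a\<in>A. w a * f a k)^2) \<le> B"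
proof -
  have "(\<Sum>k\<in>K. (\<Sum>a\<in>A. w a * f a k)^2) \<le> (\<Sum>k\<in>K. \<Sum>a\<in>A. w a * (f a k)^2)"
    by (rule sum_mono) (rule cs_weighted[OF A w sw])
  also have "\<dots> = (\<Sum>a\<in>A. w a * (\<Sum>k\<in>K. (f a k)^2))"
    by (simp add: sum_distrib_left sum.swap[of _ K])
  also have "\<dots> \<le> (\<Sum>a\<in>A. w a * B)"
    by (rule sum_mono) (simp add: w fb mult_left_mono)
  also have "\<dots> = sum w A * B" by (simp add: sum_distrib_right)
  also have "\<dots> \<le> B" using sw B mult_right_mono[of "sum w A" 1 B] by simp
  finally show ?thesis .
qed

lemma cdfF_lin:
  assumes "finite A"
  shows "cdfF (\<lambda>k. \<Sum>j\<in>A. a j * v j k) k = (\<Sum>j\<in>A. a j * cdfF (v j) k)"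
  unfolding cdfF_def by (simp add: sum_distrib_left sum.swap[of _ A])

lemma cat_proj_fin:
  assumes "finite (set_pmf M)"
  shows "cat_proj th0 Del d (map_pmf \<phi> M) = (\<lambda>k. \<Sum>r\<in>set_pmf M. pmf M r * proj_dirac th0 Del d (\<phi> r) k)"
  unfolding cat_proj_def
  by (auto simp: integral_measure_pmf_real[OF assms] mult.commute)

lemma cdf_Gop:
  fixes P :: "'s::finite \<Rightarrow> 's \<Rightarrow> real"
  assumes fin: "\<And>i j. finite (set_pmf (R i j))"
  shows "cdfF (Gop th0 Del d P R g p i) k = (\<Sum>j\<in>UNIV. P i j * (\<Sum>k'<d. p j k' *
     (\<Sum>r\<in>set_pmf (R i j). pmf (R i j) r * cdfF (proj_dirac th0 Del d (r - g + theta th0 Del k')) k)))"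
proof -
  have "Gop th0 Del d P R g p i = (\<lambda>k. \<Sum>j\<in>UNIV. P i j * (\<Sum>k'<d. p j k' *
     (\<Sum>r\<in>set_pmf (R i j). pmf (R i j) r * proj_dirac th0 Del d (r - g + theta th0 Del k') k)))"
    unfolding Gop_def[abs_def] by (simp add: cat_proj_fin[OF fin])
  then show ?thesis
    by (simp add: cdfF_lin[where A="UNIV"] cdfF_lin[where A="{..<d}"] cdfF_lin[OF fin])
qed

lemma cramer_L2:
  assumes "Del > 0"
  shows "cramer Del d u v = sqrt Del * L2_set (\<lambda>k. cdfF u k - cdfF v k) {..<d-1}"
  using assms by (simp add: cramer_def L2_set_def real_sqrt_mult)

lemma cramer_nonneg: "Del > 0 \<Longrightarrow> 0 \<le> cramer Del d u v"
  by (simp add: cramer_L2)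

lemma cramer_triangle:
  assumes D: "Del > 0"
  shows "cramer Del d u w \<le> cramer Del d u v + cramer Del d v w"
proof -
  have "L2_set (\<lambda>k. cdfF u k - cdfF w k) {..<d-1}
     \<le> L2_set (\<lambda>k. cdfF u k - cdfF v k) {..<d-1} + L2_set (\<lambda>k. cdfF v k - cdfF w k) {..<d-1}"
    using L2_set_triangle_ineq[of "\<lambda>k. cdfF u k - cdfF v k" "\<lambda>k. cdfF v k - cdfF w k" "{..<d-1}"]
    by simp
  then have "sqrt Del * L2_set (\<lambda>k. cdfF u k - cdfF w k) {..<d-1}
     \<le> sqrt Del * (L2_set (\<lambda>k. cdfF u k - cdfF v k) {..<d-1} + L2_set (\<lambda>k. cdfF v k - cdfF w k) {..<d-1})"
    by (rule mult_left_mono) (use D in simp)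
  then show ?thesis unfolding cramer_L2[OF D] by (simp add: distrib_left)
qed

lemma cramer_hop:
  assumes D: "Del > 0" and m: "0 \<le> mu i"
  shows "cramer Del d (p i) (hop th0 Del d P R mu g p i) = mu i * cramer Del d (p i) (Gop th0 Del d P R g p i)"
proof -
  have "cdfF (p i) k - cdfF (hop th0 Del d P R mu g p i) k = mu i * (cdfF (p i) k - cdfF (Gop th0 Del d P R g p i) k)" for k
  proof -
    have "cdfF (hop th0 Del d P R mu g p i) k = (1 - mu i) * cdfF (p i) k + mu i * cdfF (Gop th0 Del d P R g p i) k"
      unfolding cdfF_def hop_def by (simp add: sum.distrib sum_distrib_left)
    then show ?thesis by (simp add: right_diff_distrib left_diff_distrib)
  qed
  then show ?thesis unfolding cramer_L2[OF D]
    by (simp add: L2_set_right_distrib[OF m, symmetric])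
qed

lemma sum_diff_mult:
  fixes a x y :: "'a \<Rightarrow> real"
  shows "(\<Sum>j\<in>A. a j * x j) - (\<Sum>j\<in>A. a j * y j) = (\<Sum>j\<in>A. a j * (x j - y j))"
  by (simp add: sum_subtractf right_diff_distrib)

lemma Gop_lip:
  fixes P :: "'s::finite \<Rightarrow> 's \<Rightarrow> real"
  assumes st: "stochastic_matrix P" and fin: "\<And>i j. finite (set_pmf (R i j))"
    and D: "Del > 0" and p: "\<And>i. p i \<in> prob_simplex d"
  shows "cramer Del d (Gop th0 Del d P R g p i) (Gop th0 Del d P R g' p i) \<le> \<bar>g - g'\<bar> / sqrt Del"
proof -
  define C where "C x k = cdfF (proj_dirac th0 Del d x) k" for x k
  define B where "B = ((g' - g) / Del)^2"
  have diff: "cdfF (Gop th0 Del d P R g p i) k - cdfF (Gop th0 Del d P R g' p i) k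
     = (\<Sum>j\<in>UNIV. P i j * (\<Sum>k'<d. p j k' * (\<Sum>r\<in>set_pmf (R i j). pmf (R i j) r *
         (C (r - g + theta th0 Del k') k - C (r - g' + theta th0 Del k') k))))" for k
    unfolding cdf_Gop[OF fin] C_def
    by (simp only: sum_diff_mult)
  have "(\<Sum>k<d-1. (cdfF (Gop th0 Del d P R g p i) k - cdfF (Gop th0 Del d P R g' p i) k)^2) \<le> B"
    unfolding diff
  proof (rule jensen_L2)
    show "0 \<le> P i j" for j using st by (simp add: stochastic_matrix_def)
    show "sum (P i) UNIV \<le> 1" using st by (simp add: stochastic_matrix_def)
    show "0 \<le> B" by (simp add: B_def)
    fix j
    show "(\<Sum>k<d-1. (\<Sum>k'<d. p j k' * (\<Sum>r\<in>set_pmf (R i j). pmf (R i j) r *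
         (C (r - g + theta th0 Del k') k - C (r - g' + theta th0 Del k') k)))^2) \<le> B"
    proof (rule jensen_L2)
      show "0 \<le> p j k'" if "k' \<in> {..<d}" for k' using p[of j] that by (simp add: prob_simplex_def)
      show "sum (p j) {..<d} \<le> 1" using p[of j] by (simp add: prob_simplex_def)
      show "0 \<le> B" by (simp add: B_def)
      fix k'
      show "(\<Sum>k<d-1. (\<Sum>r\<in>set_pmf (R i j). pmf (R i j) r *
         (C (r - g + theta th0 Del k') k - C (r - g' + theta th0 Del k') k))^2) \<le> B"
      proof (rule jensen_L2)
        show "sum (pmf (R i j)) (set_pmf (R i j)) \<le> 1" using sum_pmf_eq_1[OF fin] by simp
        show "0 \<le> B" by (simp add: B_def)
        fix r
        show "(\<Sum>k<d-1. (C (r - g + theta th0 Del k') k - C (r - g' + theta th0 Del k') k)^2) \<le> B"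
        proof -
          have "(\<Sum>k<d-1. (C (r - g + theta th0 Del k') k - C (r - g' + theta th0 Del k') k)^2)
             \<le> (((r - g + theta th0 Del k') - (r - g' + theta th0 Del k')) / Del)^2"
            unfolding C_def by (rule cdf_diff_bound[OF D])
          then show ?thesis unfolding B_def by simp
        qed
      qed (auto simp: fin)
    qed auto
  qed auto
  then have "cramer Del d (Gop th0 Del d P R g p i) (Gop th0 Del d P R g' p i) \<le> sqrt (Del * B)"
    unfolding cramer_def using D by (simp add: mult_left_mono)
  also have "sqrt (Del * B) = \<bar>g - g'\<bar> / sqrt Del"
  proof -
    have "Del * B = (\<bar>g - g'\<bar> / sqrt Del)^2" using D
      by (simp add: B_def power_divide power2_abs power2_eq_square field_simps)
    then show ?thesis using D by simp
  qed
  finally show ?thesis .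
qed

theorem corollary3:
  fixes P :: "'s::finite \<Rightarrow> 's \<Rightarrow> real"
    and R :: "'s \<Rightarrow> 's \<Rightarrow> real pmf"
    and mu :: "'s \<Rightarrow> real"
    and th0 Del lam g :: real
    and d :: nat
    and p :: "'s \<Rightarrow> nat \<Rightarrow> real"
  assumes "stochastic_matrix P"
    and "irreducible_matrix P"
    and "aperiodic_matrix P"
    and "stationary_dist P mu"
    and "\<And>i j. finite (set_pmf (R i j)) \<and> set_pmf (R i j) \<subseteq> {0..1}"
    and "Del > 0"
    and "lam \<ge> 1 / sqrt Del"
    and "\<And>i. p i \<in> prob_simplex d"
    and "g \<in> {0..1}"
  shows "Min (range mu) * cramer_inf Del d p (Gop th0 Del d P R (gain P R mu) p)
           \<le> dlam Del d lam (p, g) (hop th0 Del d P R mu g p, gain P R mu)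
         \<and> \<bar>g - gain P R mu\<bar>
           \<le> dlam Del d lam (p, g) (hop th0 Del d P R mu g p, gain P R mu) / lam"
proof -
  note st = assms(1) and D = assms(6) and lam = assms(7) and pS = assms(8)
  have fin: "\<And>i j. finite (set_pmf (R i j))" using assms(5) by blast
  define r where "r = gain P R mu"
  define G where "G = Gop th0 Del d P R r p"
  define Gg where "Gg = Gop th0 Del d P R g p"
  define h where "h = hop th0 Del d P R mu g p"
  define ci where "ci = cramer_inf Del d p h"
  have sD: "sqrt Del > 0" using D by simp
  have lpos: "lam > 0" using lam sD by (meson less_le_trans zero_less_divide_1_iff)
  have mu_nn: "0 \<le> mu i" for i using assms(4) by (simp add: stationary_dist_def)
  have mu_le: "mu i \<le> 1" for i
  proof -
    have "mu i \<le> (\<Sum>j\<in>UNIV. mu j)" by (rule member_le_sum) (auto simp: mu_nn)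
    then show ?thesis using assms(4) by (simp add: stationary_dist_def)
  qed
  have ci_ge: "cramer Del d (p i) (h i) \<le> ci" for i
    unfolding ci_def cramer_inf_def by (rule Max_ge) auto
  have ci_nn: "0 \<le> ci" using ci_ge[of undefined] cramer_nonneg[OF D, of d "p undefined" "h undefined"] by linarith
  have lip: "cramer Del d (Gg i) (G i) \<le> lam * \<bar>g - r\<bar>" for i
  proof -
    have "cramer Del d (Gg i) (G i) \<le> \<bar>g - r\<bar> / sqrt Del"
      unfolding Gg_def G_def by (rule Gop_lip[OF st fin D pS])
    also have "\<dots> = (1 / sqrt Del) * \<bar>g - r\<bar>" by simp
    also have "\<dots> \<le> lam * \<bar>g - r\<bar>" by (rule mult_right_mono[OF lam]) simp
    finally show ?thesis .
  qed
  have each: "mu i * cramer Del d (p i) (G i) \<le> ci + lam * \<bar>g - r\<bar>" for i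
  proof -
    have "mu i * cramer Del d (p i) (G i) \<le> mu i * (cramer Del d (p i) (Gg i) + cramer Del d (Gg i) (G i))"
      by (rule mult_left_mono[OF cramer_triangle[OF D] mu_nn])
    also have "\<dots> = cramer Del d (p i) (h i) + mu i * cramer Del d (Gg i) (G i)"
    proof -
      have hh: "cramer Del d (p i) (hop th0 Del d P R mu g p i) = mu i * cramer Del d (p i) (Gop th0 Del d P R g p i)"
        by (rule cramer_hop[OF D mu_nn])
      show ?thesis unfolding h_def Gg_def hh by (simp add: distrib_left)
    qed
    also have "mu i * cramer Del d (Gg i) (G i) \<le> cramer Del d (Gg i) (G i)"
      using mu_le[of i] cramer_nonneg[OF D, of d "Gg i" "G i"] mult_right_mono[of "mu i" 1] by fastforce
    finally show ?thesis using ci_ge[of i] lip[of i] by linarith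
  qed
  have "Max (range (\<lambda>i. cramer Del d (p i) (G i))) \<in> range (\<lambda>i. cramer Del d (p i) (G i))"
    by (rule Max_in) auto
  then obtain i0 where "Max (range (\<lambda>i. cramer Del d (p i) (G i))) = cramer Del d (p i0) (G i0)"
    by blast
  then have i0: "cramer_inf Del d p G = cramer Del d (p i0) (G i0)"
    unfolding cramer_inf_def by simp
  have "Min (range mu) \<le> mu i0" by (rule Min_le) auto
  then have "Min (range mu) * cramer_inf Del d p G \<le> mu i0 * cramer Del d (p i0) (G i0)"
    unfolding i0 by (rule mult_right_mono) (rule cramer_nonneg[OF D])
  also have "\<dots> \<le> ci + lam * \<bar>g - r\<bar>" by (rule each)
  finally have 1: "Min (range mu) * cramer_inf Del d p G \<le> ci + lam * \<bar>g - r\<bar>" .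
  have 2: "\<bar>g - r\<bar> \<le> (ci + lam * \<bar>g - r\<bar>) / lam"
    using lpos ci_nn by (simp add: pos_le_divide_eq)
  have dl: "dlam Del d lam (p, g) (h, r) = ci + lam * \<bar>g - r\<bar>"
    unfolding dlam_def ci_def by simp
  show ?thesis using 1 2 dl unfolding r_def[symmetric] G_def[symmetric] h_def[symmetric] by simp
qed

end
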